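(* $\widetilde{\mathbb{R}}_{sm}$, with the partial order $\le$ and with join $r\vee s=\max(r,s)$ and meet $r\wedge s=\min(r,s)$, is an $l$-ring (a partially ordered ring that is a lattice for its order).
   Context: Let $I=(0,1]$. $\widetilde{\mathbb{R}}_{sm}=\mathcal{E}_{M,sm}/\mathcal{N}_{sm}$ where $\mathcal{E}_{M,sm}$ is the set of smooth $(r_\varepsilon)_{\varepsilon\in I}\in\mathbb{R}^I$ with $|r_\varepsilon|=O(\varepsilon^{-N})$ for some $N$, and $\mathcal{N}_{sm}$ those smooth nets with $|r_\varepsilon|=O(\varepsilon^m)$ for all $m$. Similarly $\widetilde{\mathbb{R}}_{co}$ is defined with continuous nets; the natural map $\tau_{sm}:\widetilde{\mathbb{R}}_{sm}\to\widetilde{\mathbb{R}}_{co}$, $[(r_\varepsilon)]\mapsto[(r_\varepsilon)]$, is a ring isomorphism. For $r,s\in\widetilde{\mathbb{R}}_{sm}$, $r\le s$ means there are representatives with $r_\varepsilon\le s_\varepsilon$ for all $\varepsilon\in I$. For $r=[(r_\varepsilon)_\varepsilon]$, $s=[(s_\varepsilon)_\varepsilon]$: $\min(r,s)=\tau_{sm}^{-1}([(\min(r_\varepsilon,s_\varepsilon))_\varepsilon])$, $\max(r,s)=\tau_{sm}^{-1}([(\max(r_\varepsilon,s_\varepsilon))_\varepsilon])$. *)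

theory Defs
  imports Complex_Main "HOL-Algebra.Ring" "HOL-Algebra.Lattice"
begin

text \<open>Nets are functions real => real; only their values on I = (0,1] matter.\<close>

definition netI :: "real set" where "netI = {0<..1}"

text \<open>Smooth (C-infinity) on I = (0,1]: a sequence of successive derivatives exists on I
  (one-sided at the endpoint 1).\<close>
definition smooth_net :: "(real \<Rightarrow> real) \<Rightarrow> bool" where
  "smooth_net r \<longleftrightarrow> (\<exists>D :: nat \<Rightarrow> real \<Rightarrow> real.
      (\<forall>x\<in>netI. D 0 x = r x) \<and>
      (\<forall>n. \<forall>x\<in>netI. (D n has_real_derivative D (Suc n) x) (at x within netI)))"

definition cont_net :: "(real \<Rightarrow> real) \<Rightarrow> bool" where
  "cont_net r \<longleftrightarrow> continuous_on netI r"

definition moderate :: "(real \<Rightarrow> real) \<Rightarrow> bool" where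
  "moderate r \<longleftrightarrow> (\<exists>N::nat. \<exists>C e0. e0 > 0 \<and>
      (\<forall>e\<in>{0<..e0} \<inter> netI. \<bar>r e\<bar> \<le> C * inverse (e ^ N)))"

definition negligible :: "(real \<Rightarrow> real) \<Rightarrow> bool" where
  "negligible r \<longleftrightarrow> (\<forall>m::nat. \<exists>C e0. e0 > 0 \<and>
      (\<forall>e\<in>{0<..e0} \<inter> netI. \<bar>r e\<bar> \<le> C * e ^ m))"

definition E_sm :: "(real \<Rightarrow> real) set" where
  "E_sm = {r. smooth_net r \<and> moderate r}"

definition E_co :: "(real \<Rightarrow> real) set" where
  "E_co = {r. cont_net r \<and> moderate r}"

definition sm_class :: "(real \<Rightarrow> real) \<Rightarrow> (real \<Rightarrow> real) set" where
  "sm_class r = {s. s \<in> E_sm \<and> r \<in> E_sm \<and> negligible (\<lambda>e. r e - s e)}"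

definition co_class :: "(real \<Rightarrow> real) \<Rightarrow> (real \<Rightarrow> real) set" where
  "co_class r = {s. s \<in> E_co \<and> r \<in> E_co \<and> negligible (\<lambda>e. r e - s e)}"

text \<open>The quotients E_sm / N_sm and E_co / N_co, as sets of equivalence classes.\<close>
definition R_sm :: "(real \<Rightarrow> real) set set" where
  "R_sm = sm_class ` E_sm"

definition R_co :: "(real \<Rightarrow> real) set set" where
  "R_co = co_class ` E_co"

definition sm_add :: "(real \<Rightarrow> real) set \<Rightarrow> (real \<Rightarrow> real) set \<Rightarrow> (real \<Rightarrow> real) set" where
  "sm_add X Y = (\<Union>x\<in>X. \<Union>y\<in>Y. sm_class (\<lambda>e. x e + y e))"

definition sm_mult :: "(real \<Rightarrow> real) set \<Rightarrow> (real \<Rightarrow> real) set \<Rightarrow> (real \<Rightarrow> real) set" where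
  "sm_mult X Y = (\<Union>x\<in>X. \<Union>y\<in>Y. sm_class (\<lambda>e. x e * y e))"

definition R_sm_ring :: "(real \<Rightarrow> real) set ring" where
  "R_sm_ring = \<lparr> carrier = R_sm, mult = sm_mult, one = sm_class (\<lambda>_. 1),
                 zero = sm_class (\<lambda>_. 0), add = sm_add \<rparr>"

definition sm_le :: "(real \<Rightarrow> real) set \<Rightarrow> (real \<Rightarrow> real) set \<Rightarrow> bool" where
  "sm_le X Y \<longleftrightarrow> (\<exists>x\<in>X. \<exists>y\<in>Y. \<forall>e\<in>netI. x e \<le> y e)"

definition R_sm_order :: "(real \<Rightarrow> real) set gorder" where
  "R_sm_order = \<lparr> carrier = R_sm, eq = (=), le = sm_le \<rparr>"

definition tau_sm :: "(real \<Rightarrow> real) set \<Rightarrow> (real \<Rightarrow> real) set" where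
  "tau_sm X = (\<Union>x\<in>X. co_class x)"

definition sm_max :: "(real \<Rightarrow> real) set \<Rightarrow> (real \<Rightarrow> real) set \<Rightarrow> (real \<Rightarrow> real) set" where
  "sm_max X Y = the_inv_into R_sm tau_sm (\<Union>x\<in>X. \<Union>y\<in>Y. co_class (\<lambda>e. max (x e) (y e)))"

definition sm_min :: "(real \<Rightarrow> real) set \<Rightarrow> (real \<Rightarrow> real) set \<Rightarrow> (real \<Rightarrow> real) set" where
  "sm_min X Y = the_inv_into R_sm tau_sm (\<Union>x\<in>X. \<Union>y\<in>Y. co_class (\<lambda>e. min (x e) (y e)))"

end

theory Submission
  imports Defs
begin

fun Ck :: "nat \<Rightarrow> real set \<Rightarrow> (real \<Rightarrow> real) \<Rightarrow> bool" where
  "Ck 0 S f = True"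
| "Ck (Suc n) S f = (\<exists>f'. (\<forall>x\<in>S. (f has_real_derivative f' x) (at x within S)) \<and> Ck n S f')"

lemma CkI: "(\<forall>x\<in>S. (f has_real_derivative f' x) (at x within S)) \<Longrightarrow> Ck n S f' \<Longrightarrow> Ck (Suc n) S f"
  by auto

lemma Ck_Suc_imp: "Ck (Suc n) S f \<Longrightarrow> Ck n S f"
proof (induction n arbitrary: f)
  case 0 then show ?case by simp
next
  case (Suc n)
  then obtain f' where "\<forall>x\<in>S. (f has_real_derivative f' x) (at x within S)" "Ck (Suc n) S f'" by auto
  then show ?case using Suc.IH by (auto intro: CkI)
qed

lemma Ck_cong: "Ck n S f \<Longrightarrow> (\<And>x. x \<in> S \<Longrightarrow> f x = g x) \<Longrightarrow> Ck n S g"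
proof (induction n arbitrary: f g)
  case 0 then show ?case by simp
next
  case (Suc n)
  then obtain f' where d: "\<forall>x\<in>S. (f has_real_derivative f' x) (at x within S)" and c: "Ck n S f'" by auto
  have "\<forall>x\<in>S. (g has_real_derivative f' x) (at x within S)"
  proof
    fix x assume x: "x \<in> S"
    show "(g has_real_derivative f' x) (at x within S)"
      by (rule has_field_derivative_transform_within[OF d[rule_format, OF x] zero_less_one x]) (simp add: Suc.prems)
  qed
  with c show ?case by auto
qed

lemma Ck_const: "Ck n S (\<lambda>_. c)"
proof (induction n arbitrary: c)
  case 0 then show ?case by simp
next
  case (Suc n)
  have "\<forall>x\<in>S. ((\<lambda>_. c) has_real_derivative (\<lambda>_. 0) x) (at x within S)" by auto
  with Suc show ?case by (intro CkI[where f'="(\<lambda>_. 0)"]) auto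
qed

lemma Ck_id: "Ck n S (\<lambda>x. x)"
proof (cases n)
  case 0 then show ?thesis by simp
next
  case (Suc m)
  have "\<forall>x\<in>S. ((\<lambda>x. x) has_real_derivative (\<lambda>_. 1) x) (at x within S)" by auto
  with Suc show ?thesis using Ck_const[of m S 1] CkI[where f'="\<lambda>_. 1" and f="\<lambda>x. x"] by auto
qed

lemma Ck_add: "Ck n S f \<Longrightarrow> Ck n S g \<Longrightarrow> Ck n S (\<lambda>x. f x + g x)"
proof (induction n arbitrary: f g)
  case 0 then show ?case by simp
next
  case (Suc n)
  from Suc.prems obtain f' g' where
    df: "\<forall>x\<in>S. (f has_real_derivative f' x) (at x within S)" and cf: "Ck n S f'" and
    dg: "\<forall>x\<in>S. (g has_real_derivative g' x) (at x within S)" and cg: "Ck n S g'" by auto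
  have "\<forall>x\<in>S. ((\<lambda>x. f x + g x) has_real_derivative (\<lambda>x. f' x + g' x) x) (at x within S)"
    using df dg by (auto intro!: derivative_eq_intros)
  with Suc.IH[OF cf cg] show ?case by (intro CkI[where f'="(\<lambda>x. f' x + g' x)"]) auto
qed

lemma Ck_mult: "Ck n S f \<Longrightarrow> Ck n S g \<Longrightarrow> Ck n S (\<lambda>x. f x * g x)"
proof (induction n arbitrary: f g)
  case 0 then show ?case by simp
next
  case (Suc n)
  from Suc.prems obtain f' g' where
    df: "\<forall>x\<in>S. (f has_real_derivative f' x) (at x within S)" and cf: "Ck n S f'" and
    dg: "\<forall>x\<in>S. (g has_real_derivative g' x) (at x within S)" and cg: "Ck n S g'" by auto
  have f: "Ck n S f" and g: "Ck n S g" using Suc.prems Ck_Suc_imp by auto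
  have "\<forall>x\<in>S. ((\<lambda>x. f x * g x) has_real_derivative (\<lambda>x. f' x * g x + f x * g' x) x) (at x within S)"
    using df dg by (auto intro!: derivative_eq_intros simp: algebra_simps)
  moreover have "Ck n S (\<lambda>x. f' x * g x + f x * g' x)"
    by (rule Ck_add[OF Suc.IH[OF cf g] Suc.IH[OF f cg]])
  ultimately show ?case by (intro CkI[where f'="(\<lambda>x. f' x * g x + f x * g' x)"]) auto
qed

lemma Ck_cmult: "Ck n S f \<Longrightarrow> Ck n S (\<lambda>x. c * f x)"
  using Ck_mult[OF Ck_const] by blast

lemma Ck_diff: "Ck n S f \<Longrightarrow> Ck n S g \<Longrightarrow> Ck n S (\<lambda>x. f x - g x)"
proof -
  assume "Ck n S f" "Ck n S g"
  then have "Ck n S (\<lambda>x. f x + (-1) * g x)" by (intro Ck_add Ck_cmult)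
  then show ?thesis by (rule Ck_cong) simp
qed

lemma Ck_subset: "Ck n T f \<Longrightarrow> S \<subseteq> T \<Longrightarrow> Ck n S f"
proof (induction n arbitrary: f)
  case 0 then show ?case by simp
next
  case (Suc n)
  then obtain f' where d: "\<forall>x\<in>T. (f has_real_derivative f' x) (at x within T)" and c: "Ck n T f'" by auto
  have "\<forall>x\<in>S. (f has_real_derivative f' x) (at x within S)"
    using d Suc.prems(2) by (meson DERIV_subset subsetD)
  with Suc.IH[OF c Suc.prems(2)] show ?case by auto
qed

lemma Ck_compose:
  assumes "open T"
  shows "Ck n T h \<Longrightarrow> Ck n S g \<Longrightarrow> (\<And>x. x \<in> S \<Longrightarrow> g x \<in> T) \<Longrightarrow> Ck n S (\<lambda>x. h (g x))"
proof (induction n arbitrary: h g)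
  case 0 then show ?case by simp
next
  case (Suc n)
  from Suc.prems obtain h' g' where
    dh: "\<forall>y\<in>T. (h has_real_derivative h' y) (at y within T)" and ch: "Ck n T h'" and
    dg: "\<forall>x\<in>S. (g has_real_derivative g' x) (at x within S)" and cg: "Ck n S g'" by auto
  have g: "Ck n S g" using Suc.prems Ck_Suc_imp by auto
  have "\<forall>x\<in>S. ((\<lambda>x. h (g x)) has_real_derivative (\<lambda>x. h' (g x) * g' x) x) (at x within S)"
  proof
    fix x assume x: "x \<in> S"
    have gx: "g x \<in> T" by (rule Suc.prems(3)[OF x])
    have "(h has_real_derivative h' (g x)) (at (g x) within T)"
      using dh gx by blast
    then have "(h has_real_derivative h' (g x)) (at (g x))"
      using at_within_open[OF gx assms(1)] by simp
    then show "((\<lambda>x. h (g x)) has_real_derivative (\<lambda>x. h' (g x) * g' x) x) (at x within S)"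
      using dg x by (auto intro: DERIV_chain2)
  qed
  moreover have "Ck n S (\<lambda>x. h' (g x) * g' x)"
    by (rule Ck_mult[OF Suc.IH[OF ch g Suc.prems(3)] cg])
  ultimately show ?case by (intro CkI[where f'="(\<lambda>x. h' (g x) * g' x)"]) auto
qed

lemma Ck_exp: "Ck n UNIV exp"
proof (induction n)
  case 0 then show ?case by simp
next
  case (Suc n)
  have "\<forall>x\<in>UNIV. (exp has_real_derivative exp x) (at x within UNIV)" by (auto intro: DERIV_exp)
  with Suc show ?case by (intro CkI[where f'="exp"]) auto
qed

lemma Ck_inverse: "Ck n {0<..} (\<lambda>x::real. inverse x)"
proof (induction n)
  case 0 then show ?case by simp
next
  case (Suc n)
  have "\<forall>x\<in>{0<..}. ((\<lambda>x::real. inverse x) has_real_derivative (\<lambda>x. (-1) * (inverse x * inverse x)) x) (at x within {0<..})"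
    by (auto intro!: derivative_eq_intros simp: power2_eq_square)
  moreover have "Ck n {0<..} (\<lambda>x. (-1) * (inverse x * inverse x))"
    using Suc by (intro Ck_cmult Ck_mult)
  ultimately show ?case by (intro CkI[where f'="(\<lambda>x. (-1) * (inverse x * inverse x))"]) auto
qed

lemma Ck_sqrt: "Ck n {0<..} sqrt"
proof (induction n)
  case 0 then show ?case by simp
next
  case (Suc n)
  have "\<forall>x\<in>{0<..}. (sqrt has_real_derivative (\<lambda>x. (1/2) * inverse (sqrt x)) x) (at x within {0<..})"
  proof
    fix x :: real assume "x \<in> {0<..}"
    then have "DERIV sqrt x :> inverse (sqrt x) / 2" by (simp add: DERIV_real_sqrt)
    then show "(sqrt has_real_derivative (\<lambda>x. (1/2) * inverse (sqrt x)) x) (at x within {0<..})"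
      by (simp add: has_field_derivative_at_within)
  qed
  moreover have "Ck n {0<..} (\<lambda>x. (1/2) * inverse (sqrt x))"
    by (intro Ck_cmult Ck_compose[OF open_greaterThan Ck_inverse Suc]) auto
  ultimately show ?case by (intro CkI[where f'="(\<lambda>x. (1/2) * inverse (sqrt x))"]) auto
qed

lemma netI_not_bot: assumes "x \<in> netI" shows "at x within netI \<noteq> bot"
proof -
  have x: "0 < x" "x \<le> 1" using assms by (auto simp: netI_def)
  have "at x within {..<x} = at x within {0<..<x}"
    by (rule at_within_nhd[of _ "{0<..}"]) (use x in auto)
  moreover have "at x within {0<..<x} \<le> at x within netI"
    by (rule at_le) (use x in \<open>auto simp: netI_def\<close>)
  ultimately show ?thesis using trivial_limit_at_left_real[of x]
    by (metis bot.extremum_uniqueI)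
qed

lemma smooth_deriv_exists:
  assumes "\<forall>n. Ck n netI f"
  shows "\<exists>f'. (\<forall>x\<in>netI. (f has_real_derivative f' x) (at x within netI)) \<and> (\<forall>n. Ck n netI f')"
proof -
  obtain f0 where d0: "\<forall>x\<in>netI. (f has_real_derivative f0 x) (at x within netI)"
    using assms[rule_format, of 1] by auto
  have "Ck n netI f0" for n
  proof -
    obtain fn where dn: "\<forall>x\<in>netI. (f has_real_derivative fn x) (at x within netI)" and cn: "Ck n netI fn"
      using assms[rule_format, of "Suc n"] by auto
    show ?thesis
    proof (rule Ck_cong[OF cn])
      fix x assume x: "x \<in> netI"
      show "fn x = f0 x"
        using has_field_derivative_unique[OF dn[rule_format, OF x] d0[rule_format, OF x] netI_not_bot[OF x]] .
    qed
  qed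
  with d0 show ?thesis by blast
qed

primrec iterD :: "(real \<Rightarrow> real) \<Rightarrow> nat \<Rightarrow> real \<Rightarrow> real" where
  "iterD f 0 = f"
| "iterD f (Suc n) = (SOME g. (\<forall>x\<in>netI. (iterD f n has_real_derivative g x) (at x within netI)) \<and> (\<forall>k. Ck k netI g))"

lemma iterD_props:
  assumes "\<forall>n. Ck n netI f"
  shows "(\<forall>k. Ck k netI (iterD f n)) \<and> (\<forall>x\<in>netI. (iterD f n has_real_derivative iterD f (Suc n) x) (at x within netI))"
proof (induction n)
  case 0
  show ?case using assms someI_ex[OF smooth_deriv_exists[OF assms]] by simp
next
  case (Suc n)
  have "\<forall>k. Ck k netI (iterD f (Suc n))"
    using someI_ex[OF smooth_deriv_exists[of "iterD f n"]] Suc by simp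
  then show ?case using someI_ex[OF smooth_deriv_exists[of "iterD f (Suc n)"]] by simp
qed

lemma smooth_net_iff: "smooth_net f \<longleftrightarrow> (\<forall>n. Ck n netI f)"
proof
  assume "smooth_net f"
  then obtain D where D0: "\<forall>x\<in>netI. D 0 x = f x"
    and DS: "\<forall>n. \<forall>x\<in>netI. (D n has_real_derivative D (Suc n) x) (at x within netI)"
    unfolding smooth_net_def by blast
  have "\<forall>k. Ck n netI (D k)" for n
  proof (induction n)
    case 0 then show ?case by simp
  next
    case (Suc n)
    show ?case
    proof
      fix k show "Ck (Suc n) netI (D k)"
        using DS Suc by (intro CkI[where f'="D (Suc k)"]) auto
    qed
  qed
  then show "\<forall>n. Ck n netI f" using D0 Ck_cong by metis
next
  assume a: "\<forall>n. Ck n netI f"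
  show "smooth_net f" unfolding smooth_net_def
    by (rule exI[of _ "iterD f"]) (use iterD_props[OF a] in simp)
qed

lemma smooth_net_cont: "smooth_net f \<Longrightarrow> continuous_on netI f"
proof -
  assume "smooth_net f"
  then have "Ck 1 netI f" by (simp add: smooth_net_iff)
  then obtain f' where d: "\<forall>x\<in>netI. (f has_real_derivative f' x) (at x within netI)" by auto
  show ?thesis unfolding continuous_on_eq_continuous_within
    using d DERIV_continuous by blast
qed

lemma negligible_zero: "negligible (\<lambda>_. 0)"
  unfolding negligible_def by (auto intro!: exI[of _ 0] exI[of _ 1])

lemma negligible_le:
  assumes g: "negligible g" and le: "\<forall>e\<in>netI. \<bar>f e\<bar> \<le> \<bar>g e\<bar>"
  shows "negligible f"
  unfolding negligible_def
proof
  fix m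
  obtain C e0 where "e0 > 0" "\<forall>e\<in>{0<..e0} \<inter> netI. \<bar>g e\<bar> \<le> C * e ^ m"
    using g unfolding negligible_def by blast
  then show "\<exists>C e0. e0 > 0 \<and> (\<forall>e\<in>{0<..e0} \<inter> netI. \<bar>f e\<bar> \<le> C * e ^ m)"
    using le by (meson IntD2 order_trans)
qed

lemma negligible_add:
  assumes f: "negligible f" and g: "negligible g"
  shows "negligible (\<lambda>e. f e + g e)"
  unfolding negligible_def
proof
  fix m
  obtain C1 e1 where 1: "e1 > 0" "\<forall>e\<in>{0<..e1} \<inter> netI. \<bar>f e\<bar> \<le> C1 * e ^ m"
    using f unfolding negligible_def by blast
  obtain C2 e2 where 2: "e2 > 0" "\<forall>e\<in>{0<..e2} \<inter> netI. \<bar>g e\<bar> \<le> C2 * e ^ m"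
    using g unfolding negligible_def by blast
  have "\<forall>e\<in>{0<..min e1 e2} \<inter> netI. \<bar>f e + g e\<bar> \<le> (C1 + C2) * e ^ m"
  proof
    fix e assume e: "e \<in> {0<..min e1 e2} \<inter> netI"
    have "\<bar>f e + g e\<bar> \<le> \<bar>f e\<bar> + \<bar>g e\<bar>" by (rule abs_triangle_ineq)
    also have "\<dots> \<le> C1 * e ^ m + C2 * e ^ m" using 1 2 e by (intro add_mono) auto
    finally show "\<bar>f e + g e\<bar> \<le> (C1 + C2) * e ^ m" by (simp add: algebra_simps)
  qed
  then show "\<exists>C e0. e0 > 0 \<and> (\<forall>e\<in>{0<..e0} \<inter> netI. \<bar>f e + g e\<bar> \<le> C * e ^ m)"
    using 1 2 by (metis min_less_iff_conj)
qed

lemma negligible_abs_sum3: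
  "negligible f \<Longrightarrow> negligible g \<Longrightarrow> negligible h \<Longrightarrow>
   \<forall>e\<in>netI. \<bar>k e\<bar> \<le> \<bar>f e\<bar> + \<bar>g e\<bar> + \<bar>h e\<bar> \<Longrightarrow> negligible k"
proof -
  assume f: "negligible f" and g: "negligible g" and h: "negligible h"
     and le: "\<forall>e\<in>netI. \<bar>k e\<bar> \<le> \<bar>f e\<bar> + \<bar>g e\<bar> + \<bar>h e\<bar>"
  have af: "negligible (\<lambda>e. \<bar>f e\<bar>)" using negligible_le[OF f] by simp
  have ag: "negligible (\<lambda>e. \<bar>g e\<bar>)" using negligible_le[OF g] by simp
  have ah: "negligible (\<lambda>e. \<bar>h e\<bar>)" using negligible_le[OF h] by simp
  have s: "negligible (\<lambda>e. \<bar>f e\<bar> + \<bar>g e\<bar> + \<bar>h e\<bar>)"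
    by (intro negligible_add af ag ah)
  show ?thesis using negligible_le[OF s, of k] le by auto
qed

lemma negligible_sym: "negligible (\<lambda>e. f e - g e) \<Longrightarrow> negligible (\<lambda>e. g e - f e)"
  by (erule negligible_le) (simp add: abs_minus_commute)

lemma negligible_trans: "negligible (\<lambda>e. f e - g e) \<Longrightarrow> negligible (\<lambda>e. g e - h e) \<Longrightarrow> negligible (\<lambda>e. f e - h e)"
  by (drule (1) negligible_add) simp

lemma inv_pow_mono: "0 < (e::real) \<Longrightarrow> e \<le> 1 \<Longrightarrow> inverse (e ^ a) \<le> inverse (e ^ (a + b))"
  by (intro le_imp_inverse_le) (auto intro: power_decreasing)

lemma moderate_le:
  assumes g: "moderate g" and le: "\<forall>e\<in>netI. \<bar>f e\<bar> \<le> \<bar>g e\<bar>"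
  shows "moderate f"
proof -
  obtain N C e0 where "e0 > 0" "\<forall>e\<in>{0<..e0} \<inter> netI. \<bar>g e\<bar> \<le> C * inverse (e ^ N)"
    using g unfolding moderate_def by blast
  then show ?thesis unfolding moderate_def using le by (meson IntD2 order_trans)
qed

lemma moderate_const: "moderate (\<lambda>_. c)"
  unfolding moderate_def by (rule exI[of _ 0], rule exI[of _ "\<bar>c\<bar>"], rule exI[of _ 1]) auto

lemma moderate_add:
  assumes f: "moderate f" and g: "moderate g"
  shows "moderate (\<lambda>e. f e + g e)"
proof -
  obtain N1 C1 e1 where 1: "e1 > 0" "\<forall>e\<in>{0<..e1} \<inter> netI. \<bar>f e\<bar> \<le> C1 * inverse (e ^ N1)"
    using f unfolding moderate_def by blast
  obtain N2 C2 e2 where 2: "e2 > 0" "\<forall>e\<in>{0<..e2} \<inter> netI. \<bar>g e\<bar> \<le> C2 * inverse (e ^ N2)"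
    using g unfolding moderate_def by blast
  have "\<forall>e\<in>{0<..min e1 e2} \<inter> netI. \<bar>f e + g e\<bar> \<le> (\<bar>C1\<bar> + \<bar>C2\<bar>) * inverse (e ^ (N1 + N2))"
  proof
    fix e assume e: "e \<in> {0<..min e1 e2} \<inter> netI"
    then have e01: "0 < e" "e \<le> 1" by (auto simp: netI_def)
    have i1: "inverse (e ^ N1) \<le> inverse (e ^ (N1 + N2))" using inv_pow_mono[OF e01] .
    have i2: "inverse (e ^ N2) \<le> inverse (e ^ (N1 + N2))" using inv_pow_mono[OF e01, of N2 N1]
      by (simp add: add.commute)
    have p: "0 \<le> inverse (e ^ N1)" "0 \<le> inverse (e ^ N2)" using e01 by auto
    have "\<bar>f e + g e\<bar> \<le> \<bar>f e\<bar> + \<bar>g e\<bar>" by (rule abs_triangle_ineq)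
    also have "\<dots> \<le> C1 * inverse (e ^ N1) + C2 * inverse (e ^ N2)" using 1 2 e by (intro add_mono) auto
    also have "\<dots> \<le> \<bar>C1\<bar> * inverse (e ^ (N1 + N2)) + \<bar>C2\<bar> * inverse (e ^ (N1 + N2))"
    proof (intro add_mono)
      show "C1 * inverse (e ^ N1) \<le> \<bar>C1\<bar> * inverse (e ^ (N1 + N2))"
        by (meson abs_ge_self abs_ge_zero i1 mult_mono order.trans p(1))
      show "C2 * inverse (e ^ N2) \<le> \<bar>C2\<bar> * inverse (e ^ (N1 + N2))"
        by (meson abs_ge_self abs_ge_zero i2 mult_mono order.trans p(2))
    qed
    finally show "\<bar>f e + g e\<bar> \<le> (\<bar>C1\<bar> + \<bar>C2\<bar>) * inverse (e ^ (N1 + N2))" by (simp add: algebra_simps)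
  qed
  then show ?thesis unfolding moderate_def using 1 2 by (metis min_less_iff_conj)
qed

lemma moderate_mult:
  assumes f: "moderate f" and g: "moderate g"
  shows "moderate (\<lambda>e. f e * g e)"
proof -
  obtain N1 C1 e1 where 1: "e1 > 0" "\<forall>e\<in>{0<..e1} \<inter> netI. \<bar>f e\<bar> \<le> C1 * inverse (e ^ N1)"
    using f unfolding moderate_def by blast
  obtain N2 C2 e2 where 2: "e2 > 0" "\<forall>e\<in>{0<..e2} \<inter> netI. \<bar>g e\<bar> \<le> C2 * inverse (e ^ N2)"
    using g unfolding moderate_def by blast
  have "\<forall>e\<in>{0<..min e1 e2} \<inter> netI. \<bar>f e * g e\<bar> \<le> (C1 * C2) * inverse (e ^ (N1 + N2))"
  proof
    fix e assume e: "e \<in> {0<..min e1 e2} \<inter> netI"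
    have a: "\<bar>f e\<bar> \<le> C1 * inverse (e ^ N1)" "\<bar>g e\<bar> \<le> C2 * inverse (e ^ N2)" using 1 2 e by auto
    have "\<bar>f e * g e\<bar> = \<bar>f e\<bar> * \<bar>g e\<bar>" by (simp add: abs_mult)
    also have "\<dots> \<le> (C1 * inverse (e ^ N1)) * (C2 * inverse (e ^ N2))"
      using a by (intro mult_mono) auto
    also have "\<dots> = (C1 * C2) * inverse (e ^ (N1 + N2))" by (simp add: power_add algebra_simps)
    finally show "\<bar>f e * g e\<bar> \<le> (C1 * C2) * inverse (e ^ (N1 + N2))" .
  qed
  then show ?thesis unfolding moderate_def using 1 2 by (metis min_less_iff_conj)
qed

lemma negligible_mult_moderate:
  assumes f: "negligible f" and g: "moderate g"
  shows "negligible (\<lambda>e. f e * g e)"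
  unfolding negligible_def
proof
  fix m
  obtain N C2 e2 where 2: "e2 > 0" "\<forall>e\<in>{0<..e2} \<inter> netI. \<bar>g e\<bar> \<le> C2 * inverse (e ^ N)"
    using g unfolding moderate_def by blast
  obtain C1 e1 where 1: "e1 > 0" "\<forall>e\<in>{0<..e1} \<inter> netI. \<bar>f e\<bar> \<le> C1 * e ^ (m + N)"
    using f unfolding negligible_def by blast
  have "\<forall>e\<in>{0<..min e1 e2} \<inter> netI. \<bar>f e * g e\<bar> \<le> (C1 * C2) * e ^ m"
  proof
    fix e assume e: "e \<in> {0<..min e1 e2} \<inter> netI"
    then have e0: "0 < e" by auto
    have a: "\<bar>f e\<bar> \<le> C1 * e ^ (m + N)" "\<bar>g e\<bar> \<le> C2 * inverse (e ^ N)" using 1 2 e by auto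
    have "\<bar>f e * g e\<bar> = \<bar>f e\<bar> * \<bar>g e\<bar>" by (simp add: abs_mult)
    also have "\<dots> \<le> (C1 * e ^ (m + N)) * (C2 * inverse (e ^ N))"
      using a by (intro mult_mono) auto
    also have "\<dots> = (C1 * C2) * e ^ m" using e0 by (simp add: power_add field_simps)
    finally show "\<bar>f e * g e\<bar> \<le> (C1 * C2) * e ^ m" .
  qed
  then show "\<exists>C e0. e0 > 0 \<and> (\<forall>e\<in>{0<..e0} \<inter> netI. \<bar>f e * g e\<bar> \<le> C * e ^ m)"
    using 1 2 by (metis min_less_iff_conj)
qed

definition ww :: "real \<Rightarrow> real" where "ww e = exp (- inverse e)"

lemma ww_pos: "0 < ww e" by (simp add: ww_def)

lemma ww_le1: "0 < e \<Longrightarrow> ww e \<le> 1" by (simp add: ww_def)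

lemma moderate_ww: "moderate ww"
  by (rule moderate_le[OF moderate_const[of 1]]) (auto simp: netI_def ww_le1 abs_of_pos ww_pos)

lemma exp_ge_pow: assumes "0 \<le> t" shows "(t / real (Suc m)) ^ Suc m \<le> exp t"
proof -
  have "t / real (Suc m) \<le> exp (t / real (Suc m))"
    using exp_ge_add_one_self[of "t / real (Suc m)"] by linarith
  then have "(t / real (Suc m)) ^ Suc m \<le> exp (t / real (Suc m)) ^ Suc m"
    using assms by (intro power_mono) auto
  also have "\<dots> = exp (real (Suc m) * (t / real (Suc m)))" by (simp only: exp_of_nat_mult)
  also have "\<dots> = exp t" by simp
  finally show ?thesis .
qed

lemma ww_bound: assumes "0 < e" "e \<le> 1" shows "ww e \<le> real (Suc m) ^ Suc m * e ^ m"
proof -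
  let ?t = "inverse e"
  let ?k = "real (Suc m)"
  have t: "0 < ?t" using assms by simp
  have eq1: "?t / ?k = inverse (?k * e)"
    by (simp add: divide_inverse inverse_mult_distrib mult.commute)
  have eq2: "inverse ((?t / ?k) ^ Suc m) = ?k ^ Suc m * e ^ Suc m"
    unfolding eq1 power_inverse inverse_inverse_eq power_mult_distrib ..
  have "(?t / ?k) ^ Suc m \<le> exp ?t" using exp_ge_pow t by simp
  moreover have pos: "0 < (?t / ?k) ^ Suc m" using t by simp
  ultimately have "inverse (exp ?t) \<le> inverse ((?t / ?k) ^ Suc m)"
    by (rule le_imp_inverse_le)
  also have "\<dots> = ?k ^ Suc m * e ^ Suc m" by (rule eq2)
  also have "\<dots> \<le> ?k ^ Suc m * e ^ m"
    using assms by (intro mult_left_mono) (auto simp: power_Suc)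
  finally show ?thesis by (simp add: ww_def exp_minus)
qed

lemma negligible_ww: "negligible ww"
  unfolding negligible_def
proof
  fix m
  show "\<exists>C e0. e0 > 0 \<and> (\<forall>e\<in>{0<..e0} \<inter> netI. \<bar>ww e\<bar> \<le> C * e ^ m)"
  proof (rule exI[of _ "real (Suc m) ^ Suc m"], rule exI[of _ 1], intro conjI ballI)
    fix e assume "e \<in> {0<..1} \<inter> netI"
    then have "0 < e" "e \<le> 1" by auto
    then show "\<bar>ww e\<bar> \<le> real (Suc m) ^ Suc m * e ^ m"
      using ww_bound[of e m] ww_pos[of e] by (simp only: abs_of_pos)
  qed simp
qed

lemma Ck_ww: "Ck n netI ww"
proof -
  have "Ck n netI (\<lambda>e. exp ((-1) * inverse e))"
  proof (rule Ck_compose[OF open_UNIV Ck_exp])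
    show "Ck n netI (\<lambda>e. (-1) * inverse e)"
      by (rule Ck_cmult, rule Ck_subset[OF Ck_inverse]) (auto simp: netI_def)
  qed auto
  then show ?thesis by (rule Ck_cong) (simp add: ww_def)
qed

lemma E_sm_iff: "f \<in> E_sm \<longleftrightarrow> (\<forall>n. Ck n netI f) \<and> moderate f"
  by (simp add: E_sm_def smooth_net_iff)

lemma E_sm_const[simp]: "(\<lambda>_. c) \<in> E_sm"
  by (simp add: E_sm_iff Ck_const moderate_const)

lemma E_sm_add[simp]: "a \<in> E_sm \<Longrightarrow> b \<in> E_sm \<Longrightarrow> (\<lambda>e. a e + b e) \<in> E_sm"
  by (simp add: E_sm_iff Ck_add moderate_add)

lemma E_sm_mult[simp]: "a \<in> E_sm \<Longrightarrow> b \<in> E_sm \<Longrightarrow> (\<lambda>e. a e * b e) \<in> E_sm"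
  by (simp add: E_sm_iff Ck_mult moderate_mult)

lemma E_sm_cmult[simp]: "a \<in> E_sm \<Longrightarrow> (\<lambda>e. c * a e) \<in> E_sm"
  using E_sm_mult[OF E_sm_const] by blast

lemma E_sm_uminus[simp]: "a \<in> E_sm \<Longrightarrow> (\<lambda>e. - a e) \<in> E_sm"
  using E_sm_cmult[of a "-1"] by simp

lemma E_sm_diff[simp]: "a \<in> E_sm \<Longrightarrow> b \<in> E_sm \<Longrightarrow> (\<lambda>e. a e - b e) \<in> E_sm"
  using E_sm_add[of a "\<lambda>e. - b e"] by simp

lemma E_sm_ww[simp]: "ww \<in> E_sm"
  by (simp add: E_sm_iff Ck_ww moderate_ww)

lemma E_sm_co: "a \<in> E_sm \<Longrightarrow> a \<in> E_co"
  by (simp add: E_sm_def E_co_def cont_net_def smooth_net_cont)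

lemma moderate_abs: "moderate a \<Longrightarrow> moderate (\<lambda>e. \<bar>a e\<bar>)"
  by (erule moderate_le) simp

lemma E_co_max: "a \<in> E_co \<Longrightarrow> b \<in> E_co \<Longrightarrow> (\<lambda>e. max (a e) (b e)) \<in> E_co"
proof -
  assume a: "a \<in> E_co" and b: "b \<in> E_co"
  have "continuous_on netI (\<lambda>e. max (a e) (b e))"
    using a b by (intro continuous_on_max) (auto simp: E_co_def cont_net_def)
  moreover have "moderate (\<lambda>e. \<bar>a e\<bar> + \<bar>b e\<bar>)"
    using a b by (intro moderate_add moderate_abs) (auto simp: E_co_def)
  then have "moderate (\<lambda>e. max (a e) (b e))" by (rule moderate_le) auto
  ultimately show ?thesis by (simp add: E_co_def cont_net_def)
qed

lemma E_co_min: "a \<in> E_co \<Longrightarrow> b \<in> E_co \<Longrightarrow> (\<lambda>e. min (a e) (b e)) \<in> E_co"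
proof -
  assume a: "a \<in> E_co" and b: "b \<in> E_co"
  have "continuous_on netI (\<lambda>e. min (a e) (b e))"
    using a b by (intro continuous_on_min) (auto simp: E_co_def cont_net_def)
  moreover have "moderate (\<lambda>e. \<bar>a e\<bar> + \<bar>b e\<bar>)"
    using a b by (intro moderate_add moderate_abs) (auto simp: E_co_def)
  then have "moderate (\<lambda>e. min (a e) (b e))" by (rule moderate_le) auto
  ultimately show ?thesis by (simp add: E_co_def cont_net_def)
qed

definition cls :: "(real \<Rightarrow> real) set \<Rightarrow> (real \<Rightarrow> real) \<Rightarrow> (real \<Rightarrow> real) set" where
  "cls E r = {s. s \<in> E \<and> r \<in> E \<and> negligible (\<lambda>e. r e - s e)}"

lemma sm_class_cls: "sm_class = cls E_sm"
  by (rule ext) (simp add: sm_class_def cls_def)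

lemma co_class_cls: "co_class = cls E_co"
  by (rule ext) (simp add: co_class_def cls_def)

lemma mem_cls: "s \<in> cls E r \<longleftrightarrow> s \<in> E \<and> r \<in> E \<and> negligible (\<lambda>e. r e - s e)"
  by (simp add: cls_def)

lemma cls_self: "r \<in> E \<Longrightarrow> r \<in> cls E r"
  by (simp add: cls_def negligible_zero)

lemma cls_eqI: "r \<in> E \<Longrightarrow> s \<in> E \<Longrightarrow> negligible (\<lambda>e. r e - s e) \<Longrightarrow> cls E r = cls E s"
  unfolding cls_def
  by (auto dest: negligible_sym intro: negligible_trans)

lemma cls_eq: "s \<in> cls E r \<Longrightarrow> cls E s = cls E r"
  by (metis cls_eqI mem_cls negligible_sym)

lemma cls_eq_iff: "r \<in> E \<Longrightarrow> s \<in> E \<Longrightarrow> cls E r = cls E s \<longleftrightarrow> negligible (\<lambda>e. r e - s e)"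
  by (metis cls_eqI cls_self mem_cls)

lemma UN_const: "(\<And>x. x \<in> A \<Longrightarrow> F x = C) \<Longrightarrow> a \<in> A \<Longrightarrow> (\<Union>x\<in>A. F x) = C"
  by auto

lemma sm_add_cls[simp]:
  assumes a: "a \<in> E_sm" and b: "b \<in> E_sm"
  shows "sm_add (sm_class a) (sm_class b) = sm_class (\<lambda>e. a e + b e)"
  unfolding sm_add_def sm_class_cls
proof (rule UN_const[OF _ cls_self[OF a]])
  fix x assume x: "x \<in> cls E_sm a"
  show "(\<Union>y\<in>cls E_sm b. cls E_sm (\<lambda>e. x e + y e)) = cls E_sm (\<lambda>e. a e + b e)"
  proof (rule UN_const[OF _ cls_self[OF b]])
    fix y assume y: "y \<in> cls E_sm b"
    have "negligible (\<lambda>e. (a e - x e) + (b e - y e))"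
      using x y by (intro negligible_add) (auto simp: mem_cls)
    then show "cls E_sm (\<lambda>e. x e + y e) = cls E_sm (\<lambda>e. a e + b e)"
      using x y a b by (intro cls_eqI) (auto simp: mem_cls algebra_simps intro: negligible_sym)
  qed
qed

lemma sm_mult_cls[simp]:
  assumes a: "a \<in> E_sm" and b: "b \<in> E_sm"
  shows "sm_mult (sm_class a) (sm_class b) = sm_class (\<lambda>e. a e * b e)"
  unfolding sm_mult_def sm_class_cls
proof (rule UN_const[OF _ cls_self[OF a]])
  fix x assume x: "x \<in> cls E_sm a"
  show "(\<Union>y\<in>cls E_sm b. cls E_sm (\<lambda>e. x e * y e)) = cls E_sm (\<lambda>e. a e * b e)"
  proof (rule UN_const[OF _ cls_self[OF b]])
    fix y assume y: "y \<in> cls E_sm b"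
    have "negligible (\<lambda>e. (a e - x e) * b e + (b e - y e) * x e)"
      using x y b by (intro negligible_add negligible_mult_moderate) (auto simp: mem_cls E_sm_def)
    moreover have "(\<lambda>e. (a e - x e) * b e + (b e - y e) * x e) = (\<lambda>e. a e * b e - x e * y e)"
      by (auto simp: algebra_simps)
    ultimately have "negligible (\<lambda>e. a e * b e - x e * y e)" by simp
    then show "cls E_sm (\<lambda>e. x e * y e) = cls E_sm (\<lambda>e. a e * b e)"
      using x y a b by (intro cls_eqI) (auto simp: mem_cls intro: negligible_sym)
  qed
qed

lemma R_sm_cases: "X \<in> R_sm \<Longrightarrow> (\<And>a. a \<in> E_sm \<Longrightarrow> X = sm_class a \<Longrightarrow> P) \<Longrightarrow> P"
  unfolding R_sm_def by blast

lemma R_sm_cls[simp]: "a \<in> E_sm \<Longrightarrow> sm_class a \<in> R_sm"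
  unfolding R_sm_def by blast

lemma ring_R_sm: "ring R_sm_ring"
proof (rule ringI)
  show "abelian_group R_sm_ring"
  proof (rule abelian_groupI, simp_all add: R_sm_ring_def)
    show "\<And>x y. x \<in> R_sm \<Longrightarrow> y \<in> R_sm \<Longrightarrow> sm_add x y \<in> R_sm"
      by (auto elim!: R_sm_cases)
    show "\<And>x y z. x \<in> R_sm \<Longrightarrow> y \<in> R_sm \<Longrightarrow> z \<in> R_sm \<Longrightarrow> sm_add (sm_add x y) z = sm_add x (sm_add y z)"
      by (auto elim!: R_sm_cases simp: algebra_simps)
    show "\<And>x y. x \<in> R_sm \<Longrightarrow> y \<in> R_sm \<Longrightarrow> sm_add x y = sm_add y x"
      by (auto elim!: R_sm_cases simp: algebra_simps)
    show "\<And>x. x \<in> R_sm \<Longrightarrow> sm_add (sm_class (\<lambda>_. 0)) x = x"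
      by (auto elim!: R_sm_cases)
    show "\<And>x. x \<in> R_sm \<Longrightarrow> \<exists>y\<in>R_sm. sm_add y x = sm_class (\<lambda>_. 0)"
    proof -
      fix x assume "x \<in> R_sm"
      then obtain a where a: "a \<in> E_sm" "x = sm_class a" by (rule R_sm_cases)
      then show "\<exists>y\<in>R_sm. sm_add y x = sm_class (\<lambda>_. 0)"
        by (intro bexI[of _ "sm_class (\<lambda>e. - a e)"]) auto
    qed
  qed
  show "monoid R_sm_ring"
    by (rule monoidI) (auto simp: R_sm_ring_def elim!: R_sm_cases simp: algebra_simps)
  show "\<And>x y z. x \<in> carrier R_sm_ring \<Longrightarrow> y \<in> carrier R_sm_ring \<Longrightarrow> z \<in> carrier R_sm_ring \<Longrightarrow>
      (x \<oplus>\<^bsub>R_sm_ring\<^esub> y) \<otimes>\<^bsub>R_sm_ring\<^esub> z = x \<otimes>\<^bsub>R_sm_ring\<^esub> z \<oplus>\<^bsub>R_sm_ring\<^esub> y \<otimes>\<^bsub>R_sm_ring\<^esub> z"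
    by (auto simp: R_sm_ring_def elim!: R_sm_cases simp: algebra_simps)
  show "\<And>x y z. x \<in> carrier R_sm_ring \<Longrightarrow> y \<in> carrier R_sm_ring \<Longrightarrow> z \<in> carrier R_sm_ring \<Longrightarrow>
      z \<otimes>\<^bsub>R_sm_ring\<^esub> (x \<oplus>\<^bsub>R_sm_ring\<^esub> y) = z \<otimes>\<^bsub>R_sm_ring\<^esub> x \<oplus>\<^bsub>R_sm_ring\<^esub> z \<otimes>\<^bsub>R_sm_ring\<^esub> y"
    by (auto simp: R_sm_ring_def elim!: R_sm_cases simp: algebra_simps)
qed

lemma sm_le_I: "x \<in> sm_class a \<Longrightarrow> y \<in> sm_class b \<Longrightarrow> \<forall>e\<in>netI. x e \<le> y e \<Longrightarrow> sm_le (sm_class a) (sm_class b)"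
  unfolding sm_le_def by blast

lemma sm_le_shift_left:
  assumes le: "sm_le (sm_class a) (sm_class b)" and y: "y \<in> sm_class b"
  shows "\<exists>x\<in>sm_class a. \<forall>e\<in>netI. x e \<le> y e"
proof -
  obtain x0 y0 where x0: "x0 \<in> sm_class a" and y0: "y0 \<in> sm_class b" and l: "\<forall>e\<in>netI. x0 e \<le> y0 e"
    using le unfolding sm_le_def by blast
  let ?x = "\<lambda>e. x0 e + (y e - y0 e)"
  have m: "x0 \<in> E_sm" "y \<in> E_sm" "y0 \<in> E_sm" "a \<in> E_sm" "b \<in> E_sm"
    and n: "negligible (\<lambda>e. a e - x0 e)" "negligible (\<lambda>e. b e - y e)" "negligible (\<lambda>e. b e - y0 e)"
    using x0 y y0 by (auto simp: sm_class_cls mem_cls)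
  have "?x \<in> sm_class a"
    unfolding sm_class_cls mem_cls
    using m by (auto intro!: negligible_abs_sum3[OF n(1) n(2) n(3)])
  moreover have "\<forall>e\<in>netI. ?x e \<le> y e" using l by auto
  ultimately show ?thesis by (intro bexI[where x="\<lambda>e. x0 e + (y e - y0 e)"])
qed

lemma sm_le_shift_right:
  assumes le: "sm_le (sm_class a) (sm_class b)" and x: "x \<in> sm_class a"
  shows "\<exists>y\<in>sm_class b. \<forall>e\<in>netI. x e \<le> y e"
proof -
  obtain x0 y0 where x0: "x0 \<in> sm_class a" and y0: "y0 \<in> sm_class b" and l: "\<forall>e\<in>netI. x0 e \<le> y0 e"
    using le unfolding sm_le_def by blast
  let ?y = "\<lambda>e. y0 e + (x e - x0 e)"
  have m: "x0 \<in> E_sm" "x \<in> E_sm" "y0 \<in> E_sm" "a \<in> E_sm" "b \<in> E_sm"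
    and n: "negligible (\<lambda>e. a e - x0 e)" "negligible (\<lambda>e. a e - x e)" "negligible (\<lambda>e. b e - y0 e)"
    using x0 x y0 by (auto simp: sm_class_cls mem_cls)
  have "?y \<in> sm_class b"
    unfolding sm_class_cls mem_cls
    using m by (auto intro!: negligible_abs_sum3[OF n(1) n(2) n(3)])
  moreover have "\<forall>e\<in>netI. x e \<le> ?y e" using l by auto
  ultimately show ?thesis by (intro bexI[where x="\<lambda>e. y0 e + (x e - x0 e)"])
qed

lemma sm_class_self: "a \<in> E_sm \<Longrightarrow> a \<in> sm_class a"
  by (simp add: sm_class_cls cls_self)

lemma sm_class_eq: "x \<in> sm_class a \<Longrightarrow> sm_class x = sm_class a"
  by (simp add: sm_class_cls cls_eq)

lemma sm_class_E: "x \<in> sm_class a \<Longrightarrow> x \<in> E_sm"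
  by (simp add: sm_class_cls mem_cls)

lemma po_R_sm: "partial_order R_sm_order"
proof -
  have refl: "sm_le X X" if "X \<in> R_sm" for X
    using that by (auto elim!: R_sm_cases intro: sm_le_I sm_class_self)
  have antisym: "X = Y" if h: "sm_le X Y" "sm_le Y X" "X \<in> R_sm" "Y \<in> R_sm" for X Y
  proof -
    obtain a b where a: "a \<in> E_sm" "X = sm_class a" and b: "b \<in> E_sm" "Y = sm_class b"
      using h(3,4) by (blast elim: R_sm_cases)
    obtain x y where x: "x \<in> sm_class a" and y: "y \<in> sm_class b" and l: "\<forall>e\<in>netI. x e \<le> y e"
      using h(1) a b unfolding sm_le_def by blast
    obtain y' where y': "y' \<in> sm_class b" and l': "\<forall>e\<in>netI. y' e \<le> x e"
      using sm_le_shift_left[OF _ x, of b] h(2) a b by blast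
    have n: "negligible (\<lambda>e. y e - y' e)"
      using y y' by (metis mem_cls negligible_sym negligible_trans sm_class_cls)
    have "negligible (\<lambda>e. y e - x e)"
      by (rule negligible_le[OF n]) (use l l' in auto)
    then have "sm_class y = sm_class x"
      using sm_class_E[OF x] sm_class_E[OF y] by (simp add: sm_class_cls cls_eqI)
    then show ?thesis using a b x y sm_class_eq by metis
  qed
  have trans: "sm_le X Z" if h: "sm_le X Y" "sm_le Y Z" "X \<in> R_sm" "Y \<in> R_sm" "Z \<in> R_sm" for X Y Z
  proof -
    obtain a b c where a: "X = sm_class a" and b: "Y = sm_class b" and c: "Z = sm_class c"
      using h(3-5) by (blast elim: R_sm_cases)
    obtain x y where x: "x \<in> sm_class a" and y: "y \<in> sm_class b" and l: "\<forall>e\<in>netI. x e \<le> y e"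
      using h(1) a b unfolding sm_le_def by blast
    obtain z where z: "z \<in> sm_class c" and l': "\<forall>e\<in>netI. y e \<le> z e"
      using sm_le_shift_right[OF _ y, of c] h(2) b c by blast
    show ?thesis unfolding a c
      by (rule sm_le_I[OF x z]) (use l l' in \<open>fastforce\<close>)
  qed
  show ?thesis
    unfolding partial_order_def weak_partial_order_def equivalence_def weak_partial_order_axioms_def
      partial_order_axioms_def
    by (simp add: R_sm_order_def refl antisym) (blast intro: trans)
qed

lemma add_mono_R_sm:
  assumes "A \<in> R_sm" "B \<in> R_sm" "C \<in> R_sm" "sm_le A B"
  shows "sm_le (sm_add A C) (sm_add B C)"
proof -
  obtain a b c where a: "A = sm_class a" and b: "B = sm_class b" and c: "C = sm_class c" and c': "c \<in> E_sm"
    using assms(1-3) by (blast elim: R_sm_cases)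
  obtain x y where x: "x \<in> sm_class a" and y: "y \<in> sm_class b" and l: "\<forall>e\<in>netI. x e \<le> y e"
    using assms(4) a b unfolding sm_le_def by blast
  have A: "A = sm_class x" and B: "B = sm_class y" using a b x y sm_class_eq by auto
  have xE: "x \<in> E_sm" and yE: "y \<in> E_sm" using x y sm_class_E by auto
  show ?thesis unfolding A B c using xE yE c'
    by (simp, intro sm_le_I[OF sm_class_self sm_class_self]) (use l in auto)
qed

lemma mult_pos_R_sm:
  assumes "A \<in> R_sm" "B \<in> R_sm" "sm_le (sm_class (\<lambda>_. 0)) A" "sm_le (sm_class (\<lambda>_. 0)) B"
  shows "sm_le (sm_class (\<lambda>_. 0)) (sm_mult A B)"
proof -
  obtain a b where a: "A = sm_class a" and b: "B = sm_class b"
    using assms(1,2) by (blast elim: R_sm_cases)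
  obtain x where x: "x \<in> sm_class a" and lx: "\<forall>e\<in>netI. 0 \<le> x e"
    using sm_le_shift_right[OF _ sm_class_self[OF E_sm_const[of 0]], of a] assms(3) a by auto
  obtain y where y: "y \<in> sm_class b" and ly: "\<forall>e\<in>netI. 0 \<le> y e"
    using sm_le_shift_right[OF _ sm_class_self[OF E_sm_const[of 0]], of b] assms(4) b by auto
  have A: "A = sm_class x" and B: "B = sm_class y" using a b x y sm_class_eq by auto
  have xE: "x \<in> E_sm" and yE: "y \<in> E_sm" using x y sm_class_E by auto
  show ?thesis unfolding A B using xE yE
    by (simp, intro sm_le_I[OF sm_class_self sm_class_self]) (use lx ly in auto)
qed

lemma sq_lb: "\<bar>d::real\<bar> \<le> sqrt (d\<^sup>2 + w\<^sup>2)"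
  by (metis abs_ge_zero le_add_same_cancel1 real_sqrt_abs real_sqrt_le_mono zero_le_power2)

lemma sq_ub: "0 \<le> (w::real) \<Longrightarrow> sqrt (d\<^sup>2 + w\<^sup>2) \<le> \<bar>d\<bar> + w"
proof -
  assume w: "0 \<le> w"
  have "d\<^sup>2 + w\<^sup>2 \<le> (\<bar>d\<bar> + w)\<^sup>2" using w by (simp add: power2_eq_square algebra_simps)
  then have "sqrt (d\<^sup>2 + w\<^sup>2) \<le> sqrt ((\<bar>d\<bar> + w)\<^sup>2)" by (rule real_sqrt_le_mono)
  also have "\<dots> = \<bar>d\<bar> + w" using w by simp
  finally show ?thesis .
qed

lemma sq_lip: "\<bar>sqrt (a\<^sup>2 + w\<^sup>2) - sqrt (b\<^sup>2 + w\<^sup>2)\<bar> \<le> \<bar>a - b::real\<bar>"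
proof -
  let ?A = "sqrt (a\<^sup>2 + w\<^sup>2)" and ?B = "sqrt (b\<^sup>2 + w\<^sup>2)"
  have A: "\<bar>a\<bar> \<le> ?A" and B: "\<bar>b\<bar> \<le> ?B" by (rule sq_lb)+
  show ?thesis
  proof (cases "?A + ?B = 0")
    case True
    then have "?A = 0" "?B = 0" by (smt (verit) real_sqrt_ge_zero zero_le_power2)+
    then show ?thesis by simp
  next
    case False
    then have pos: "0 < ?A + ?B" using A B by (smt (verit) abs_ge_zero)
    have "(?A - ?B) * (?A + ?B) = ?A\<^sup>2 - ?B\<^sup>2" by (simp add: power2_eq_square algebra_simps)
    also have "\<dots> = a\<^sup>2 - b\<^sup>2" by simp
    also have "\<dots> = (a - b) * (a + b)" by (simp add: power2_eq_square algebra_simps)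
    finally have eq: "(?A - ?B) * (?A + ?B) = (a - b) * (a + b)" .
    have "\<bar>?A - ?B\<bar> * (?A + ?B) = \<bar>a - b\<bar> * \<bar>a + b\<bar>"
      using eq pos by (metis abs_mult abs_of_pos)
    also have "\<dots> \<le> \<bar>a - b\<bar> * (?A + ?B)"
    proof (rule mult_left_mono)
      show "\<bar>a + b\<bar> \<le> ?A + ?B" using A B abs_triangle_ineq[of a b] by linarith
    qed simp
    finally show ?thesis using pos by simp
  qed
qed

definition smx :: "(real \<Rightarrow> real) \<Rightarrow> (real \<Rightarrow> real) \<Rightarrow> real \<Rightarrow> real" where
  "smx x y e = (x e + y e + sqrt ((x e - y e)\<^sup>2 + (ww e)\<^sup>2)) / 2"

definition smn :: "(real \<Rightarrow> real) \<Rightarrow> (real \<Rightarrow> real) \<Rightarrow> real \<Rightarrow> real" where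
  "smn x y e = (x e + y e - sqrt ((x e - y e)\<^sup>2 + (ww e)\<^sup>2)) / 2"

lemma aux_max1: "\<bar>a - b\<bar> \<le> (s::real) \<Longrightarrow> max a b \<le> (a + b + s) / 2"
  by (simp add: abs_le_iff max_def)
lemma aux_max2: "0 \<le> w \<Longrightarrow> s \<le> \<bar>a - b\<bar> + (w::real) \<Longrightarrow> (a + b + s) / 2 \<le> max a b + w"
  by (auto simp: abs_if max_def split: if_splits)
lemma aux_min1: "\<bar>a - b\<bar> \<le> (s::real) \<Longrightarrow> (a + b - s) / 2 \<le> min a b"
  by (simp add: abs_le_iff min_def)
lemma aux_min2: "0 \<le> w \<Longrightarrow> s \<le> \<bar>a - b\<bar> + (w::real) \<Longrightarrow> min a b - w \<le> (a + b - s) / 2"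
  by (auto simp: abs_if min_def split: if_splits)
lemma aux_lip1: assumes "\<bar>s - t\<bar> \<le> \<bar>a - b - (a' - b')\<bar>"
  shows "\<bar>(a + b + s) / 2 - (a' + b' + t) / 2\<bar> \<le> \<bar>a - a'\<bar> + \<bar>b - (b'::real)\<bar>"
proof -
  have h: "\<bar>s - t\<bar> \<le> \<bar>a - a'\<bar> + \<bar>b - b'\<bar>"
    using assms abs_triangle_ineq4[of "a - a'" "b - b'"] by (simp add: algebra_simps)
  note f = h abs_ge_self[of "a - a'"] abs_ge_minus_self[of "a - a'"] abs_ge_self[of "b - b'"]
      abs_ge_minus_self[of "b - b'"] abs_ge_self[of "s - t"] abs_ge_minus_self[of "s - t"]
  show ?thesis unfolding abs_le_iff using f by argo
qed

lemma aux_lip2: assumes "\<bar>s - t\<bar> \<le> \<bar>a - b - (a' - b')\<bar>"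
  shows "\<bar>(a + b - s) / 2 - (a' + b' - t) / 2\<bar> \<le> \<bar>a - a'\<bar> + \<bar>b - (b'::real)\<bar>"
proof -
  have h: "\<bar>s - t\<bar> \<le> \<bar>a - a'\<bar> + \<bar>b - b'\<bar>"
    using assms abs_triangle_ineq4[of "a - a'" "b - b'"] by (simp add: algebra_simps)
  note f = h abs_ge_self[of "a - a'"] abs_ge_minus_self[of "a - a'"] abs_ge_self[of "b - b'"]
      abs_ge_minus_self[of "b - b'"] abs_ge_self[of "s - t"] abs_ge_minus_self[of "s - t"]
  show ?thesis unfolding abs_le_iff using f by argo
qed

lemma smx_ge: "max (x e) (y e) \<le> smx x y e"
  unfolding smx_def by (rule aux_max1[OF sq_lb])

lemma smx_le: "smx x y e \<le> max (x e) (y e) + ww e"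
  unfolding smx_def by (rule aux_max2[OF _ sq_ub]) (simp_all add: less_imp_le ww_pos)

lemma smn_le: "smn x y e \<le> min (x e) (y e)"
  unfolding smn_def by (rule aux_min1[OF sq_lb])

lemma smn_ge: "min (x e) (y e) - ww e \<le> smn x y e"
  unfolding smn_def by (rule aux_min2[OF _ sq_ub]) (simp_all add: less_imp_le ww_pos)

lemma smx_lip: "\<bar>smx x y e - smx x' y' e\<bar> \<le> \<bar>x e - x' e\<bar> + \<bar>y e - y' e\<bar>"
  unfolding smx_def by (rule aux_lip1[OF sq_lip])

lemma smn_lip: "\<bar>smn x y e - smn x' y' e\<bar> \<le> \<bar>x e - x' e\<bar> + \<bar>y e - y' e\<bar>"
  unfolding smn_def by (rule aux_lip2[OF sq_lip])

lemma Ck_sqrt_part: "Ck n netI x \<Longrightarrow> Ck n netI y \<Longrightarrow> Ck n netI (\<lambda>e. sqrt ((x e - y e)\<^sup>2 + (ww e)\<^sup>2))"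
proof -
  assume x: "Ck n netI x" and y: "Ck n netI y"
  have "Ck n netI (\<lambda>e. (x e - y e) * (x e - y e) + ww e * ww e)"
    by (intro Ck_add Ck_mult Ck_diff x y Ck_ww)
  then have "Ck n netI (\<lambda>e. sqrt ((x e - y e) * (x e - y e) + ww e * ww e))"
    by (rule Ck_compose[OF open_greaterThan Ck_sqrt])
       (simp add: add_nonneg_pos ww_pos)
  then show ?thesis by (rule Ck_cong) (simp add: power2_eq_square)
qed

lemma moderate_sum3: "moderate a \<Longrightarrow> moderate b \<Longrightarrow> moderate c \<Longrightarrow>
   \<forall>e\<in>netI. \<bar>f e\<bar> \<le> \<bar>a e\<bar> + \<bar>b e\<bar> + \<bar>c e\<bar> \<Longrightarrow> moderate f"
proof -
  assume a: "moderate a" and b: "moderate b" and c: "moderate c"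
    and le: "\<forall>e\<in>netI. \<bar>f e\<bar> \<le> \<bar>a e\<bar> + \<bar>b e\<bar> + \<bar>c e\<bar>"
  have s: "moderate (\<lambda>e. \<bar>a e\<bar> + \<bar>b e\<bar> + \<bar>c e\<bar>)"
    by (intro moderate_add moderate_abs a b c)
  show ?thesis using moderate_le[OF s, of f] le by auto
qed

lemma E_sm_smx[simp]: "x \<in> E_sm \<Longrightarrow> y \<in> E_sm \<Longrightarrow> smx x y \<in> E_sm"
proof -
  assume x: "x \<in> E_sm" and y: "y \<in> E_sm"
  have "Ck n netI (smx x y)" for n
  proof -
    have "Ck n netI (\<lambda>e. (1/2) * (x e + y e + sqrt ((x e - y e)\<^sup>2 + (ww e)\<^sup>2)))"
      using x y by (intro Ck_cmult Ck_add Ck_sqrt_part) (auto simp: E_sm_iff)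
    then show ?thesis by (rule Ck_cong) (simp add: smx_def)
  qed
  moreover have "moderate (smx x y)"
  proof (rule moderate_sum3[of x y ww])
    show "\<forall>e\<in>netI. \<bar>smx x y e\<bar> \<le> \<bar>x e\<bar> + \<bar>y e\<bar> + \<bar>ww e\<bar>"
      using smx_ge smx_le ww_pos by (smt (verit) max_def)
  qed (use x y in \<open>auto simp: E_sm_def moderate_ww\<close>)
  ultimately show ?thesis by (simp add: E_sm_iff)
qed

lemma E_sm_smn[simp]: "x \<in> E_sm \<Longrightarrow> y \<in> E_sm \<Longrightarrow> smn x y \<in> E_sm"
proof -
  assume x: "x \<in> E_sm" and y: "y \<in> E_sm"
  have "Ck n netI (smn x y)" for n
  proof -
    have "Ck n netI (\<lambda>e. (1/2) * (x e + y e - sqrt ((x e - y e)\<^sup>2 + (ww e)\<^sup>2)))"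
      using x y by (intro Ck_cmult Ck_diff Ck_add Ck_sqrt_part) (auto simp: E_sm_iff)
    then show ?thesis by (rule Ck_cong) (simp add: smn_def)
  qed
  moreover have "moderate (smn x y)"
  proof (rule moderate_sum3[of x y ww])
    show "\<forall>e\<in>netI. \<bar>smn x y e\<bar> \<le> \<bar>x e\<bar> + \<bar>y e\<bar> + \<bar>ww e\<bar>"
      using smn_ge smn_le ww_pos by (smt (verit) min_def)
  qed (use x y in \<open>auto simp: E_sm_def moderate_ww\<close>)
  ultimately show ?thesis by (simp add: E_sm_iff)
qed

lemma carrier_ord[simp]: "carrier R_sm_order = R_sm" and le_ord[simp]: "le R_sm_order = sm_le"
  and eq_ord[simp]: "eq R_sm_order = (=)"
  by (simp_all add: R_sm_order_def)

lemma lub_R_sm: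
  assumes x: "x \<in> E_sm" and y: "y \<in> E_sm"
  shows "least R_sm_order (sm_class (smx x y)) (Upper R_sm_order {sm_class x, sm_class y})"
proof -
  let ?M = "sm_class (smx x y)"
  have xM: "sm_le (sm_class x) ?M"
    by (rule sm_le_I[OF sm_class_self[OF x] sm_class_self[OF E_sm_smx[OF x y]]])
       (meson max.boundedE smx_ge)
  have yM: "sm_le (sm_class y) ?M"
    by (rule sm_le_I[OF sm_class_self[OF y] sm_class_self[OF E_sm_smx[OF x y]]])
       (meson max.boundedE smx_ge)
  have MU: "?M \<in> Upper R_sm_order {sm_class x, sm_class y}"
    using xM yM x y by (auto simp: Upper_def)
  have least: "sm_le ?M U" if U: "U \<in> Upper R_sm_order {sm_class x, sm_class y}" for U
  proof -
    have UR: "U \<in> R_sm" and xU: "sm_le (sm_class x) U" and yU: "sm_le (sm_class y) U"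
      using U x y by (auto simp: Upper_def)
    obtain z where z: "z \<in> E_sm" "U = sm_class z" using UR by (rule R_sm_cases)
    obtain x' where x': "x' \<in> sm_class x" and lx: "\<forall>e\<in>netI. x' e \<le> z e"
      using sm_le_shift_left[OF _ sm_class_self[OF z(1)], of x] xU z by auto
    obtain y' where y': "y' \<in> sm_class y" and ly: "\<forall>e\<in>netI. y' e \<le> z e"
      using sm_le_shift_left[OF _ sm_class_self[OF z(1)], of y] yU z by auto
    have x'E: "x' \<in> E_sm" and y'E: "y' \<in> E_sm" using x' y' sm_class_E by auto
    have nx: "negligible (\<lambda>e. x e - x' e)" and ny: "negligible (\<lambda>e. y e - y' e)"
      using x' y' by (auto simp: sm_class_cls mem_cls)
    let ?m = "\<lambda>e. smx x' y' e - ww e"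
    have mE: "?m \<in> E_sm" using x'E y'E by simp
    have "negligible (\<lambda>e. smx x y e - ?m e)"
    proof (rule negligible_abs_sum3[OF nx ny negligible_ww])
      show "\<forall>e\<in>netI. \<bar>smx x y e - (smx x' y' e - ww e)\<bar> \<le> \<bar>x e - x' e\<bar> + \<bar>y e - y' e\<bar> + \<bar>ww e\<bar>"
        using smx_lip[where x=x and y=y and x'=x' and y'=y'] by (smt (verit))
    qed
    then have m: "?m \<in> sm_class (smx x y)"
      using mE x y by (simp add: sm_class_cls mem_cls)
    have "\<forall>e\<in>netI. ?m e \<le> z e"
      using smx_le[where x=x' and y=y'] lx ly by (smt (verit) max_def)
    then show ?thesis unfolding z(2) by (rule sm_le_I[OF m sm_class_self[OF z(1)]])
  qed
  show ?thesis unfolding least_def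
    using MU least by (auto simp: Upper_def)
qed

lemma glb_R_sm:
  assumes x: "x \<in> E_sm" and y: "y \<in> E_sm"
  shows "greatest R_sm_order (sm_class (smn x y)) (Lower R_sm_order {sm_class x, sm_class y})"
proof -
  let ?M = "sm_class (smn x y)"
  have xM: "sm_le ?M (sm_class x)"
    by (rule sm_le_I[OF sm_class_self[OF E_sm_smn[OF x y]] sm_class_self[OF x]])
       (meson min.boundedE smn_le)
  have yM: "sm_le ?M (sm_class y)"
    by (rule sm_le_I[OF sm_class_self[OF E_sm_smn[OF x y]] sm_class_self[OF y]])
       (meson min.boundedE smn_le)
  have MU: "?M \<in> Lower R_sm_order {sm_class x, sm_class y}"
    using xM yM x y by (auto simp: Lower_def)
  have greatest: "sm_le U ?M" if U: "U \<in> Lower R_sm_order {sm_class x, sm_class y}" for U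
  proof -
    have UR: "U \<in> R_sm" and xU: "sm_le U (sm_class x)" and yU: "sm_le U (sm_class y)"
      using U x y by (auto simp: Lower_def)
    obtain z where z: "z \<in> E_sm" "U = sm_class z" using UR by (rule R_sm_cases)
    obtain x' where x': "x' \<in> sm_class x" and lx: "\<forall>e\<in>netI. z e \<le> x' e"
      using sm_le_shift_right[OF _ sm_class_self[OF z(1)], of x] xU z by auto
    obtain y' where y': "y' \<in> sm_class y" and ly: "\<forall>e\<in>netI. z e \<le> y' e"
      using sm_le_shift_right[OF _ sm_class_self[OF z(1)], of y] yU z by auto
    have x'E: "x' \<in> E_sm" and y'E: "y' \<in> E_sm" using x' y' sm_class_E by auto
    have nx: "negligible (\<lambda>e. x e - x' e)" and ny: "negligible (\<lambda>e. y e - y' e)"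
      using x' y' by (auto simp: sm_class_cls mem_cls)
    let ?m = "\<lambda>e. smn x' y' e + ww e"
    have mE: "?m \<in> E_sm" using x'E y'E by simp
    have "negligible (\<lambda>e. smn x y e - ?m e)"
    proof (rule negligible_abs_sum3[OF nx ny negligible_ww])
      show "\<forall>e\<in>netI. \<bar>smn x y e - (smn x' y' e + ww e)\<bar> \<le> \<bar>x e - x' e\<bar> + \<bar>y e - y' e\<bar> + \<bar>ww e\<bar>"
        using smn_lip[where x=x and y=y and x'=x' and y'=y'] by (smt (verit))
    qed
    then have m: "?m \<in> sm_class (smn x y)"
      using mE x y by (simp add: sm_class_cls mem_cls)
    have "\<forall>e\<in>netI. z e \<le> ?m e"
      using smn_ge[where x=x' and y=y'] lx ly by (smt (verit) min_def)
    then show ?thesis unfolding z(2) by (rule sm_le_I[OF sm_class_self[OF z(1)] m])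
  qed
  show ?thesis unfolding greatest_def
    using MU greatest by (auto simp: Lower_def)
qed

lemma join_eq: "partial_order L \<Longrightarrow> least L m (Upper L {a, b}) \<Longrightarrow> join L a b = m"
  unfolding join_def sup_def by (rule some_equality) (auto intro: partial_order.least_unique)

lemma meet_eq: "partial_order L \<Longrightarrow> greatest L m (Lower L {a, b}) \<Longrightarrow> meet L a b = m"
  unfolding meet_def inf_def by (rule some_equality) (auto intro: partial_order.greatest_unique)

lemma co_class_self: "a \<in> E_co \<Longrightarrow> a \<in> co_class a"
  by (simp add: co_class_cls cls_self)

lemma tau_cls: assumes a: "a \<in> E_sm" shows "tau_sm (sm_class a) = co_class a"
  unfolding tau_sm_def
proof (rule UN_const[OF _ sm_class_self[OF a]])
  fix m assume m: "m \<in> sm_class a"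
  then have "m \<in> E_sm" "negligible (\<lambda>e. a e - m e)" by (auto simp: sm_class_cls mem_cls)
  then show "co_class m = co_class a"
    using a unfolding co_class_cls by (intro cls_eqI) (auto intro: E_sm_co negligible_sym)
qed

lemma inj_tau: "inj_on tau_sm R_sm"
proof (rule inj_onI)
  fix X Y assume X: "X \<in> R_sm" and Y: "Y \<in> R_sm" and eq: "tau_sm X = tau_sm Y"
  obtain a where a: "a \<in> E_sm" "X = sm_class a" using X by (rule R_sm_cases)
  obtain b where b: "b \<in> E_sm" "Y = sm_class b" using Y by (rule R_sm_cases)
  have "co_class a = co_class b" using eq a b by (simp add: tau_cls)
  then have "negligible (\<lambda>e. a e - b e)"
    using a b by (simp add: co_class_cls cls_eq_iff E_sm_co)
  then show "X = Y" using a b by (simp add: sm_class_cls cls_eqI)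
qed

lemma max_set:
  assumes x: "x \<in> E_sm" and y: "y \<in> E_sm"
  shows "(\<Union>x'\<in>sm_class x. \<Union>y'\<in>sm_class y. co_class (\<lambda>e. max (x' e) (y' e))) = co_class (\<lambda>e. max (x e) (y e))"
proof (rule UN_const[OF _ sm_class_self[OF x]])
  fix x' assume x': "x' \<in> sm_class x"
  show "(\<Union>y'\<in>sm_class y. co_class (\<lambda>e. max (x' e) (y' e))) = co_class (\<lambda>e. max (x e) (y e))"
  proof (rule UN_const[OF _ sm_class_self[OF y]])
    fix y' assume y': "y' \<in> sm_class y"
    have E: "x' \<in> E_sm" "y' \<in> E_sm" and nx: "negligible (\<lambda>e. x e - x' e)" and ny: "negligible (\<lambda>e. y e - y' e)"
      using x' y' by (auto simp: sm_class_cls mem_cls)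
    have "negligible (\<lambda>e. max (x' e) (y' e) - max (x e) (y e))"
    proof (rule negligible_abs_sum3[OF nx ny negligible_zero])
      show "\<forall>e\<in>netI. \<bar>max (x' e) (y' e) - max (x e) (y e)\<bar> \<le> \<bar>x e - x' e\<bar> + \<bar>y e - y' e\<bar> + \<bar>0\<bar>"
        by (auto simp: max_def abs_if)
    qed
    then show "co_class (\<lambda>e. max (x' e) (y' e)) = co_class (\<lambda>e. max (x e) (y e))"
      unfolding co_class_cls using E x y by (intro cls_eqI E_co_max E_sm_co) auto
  qed
qed

lemma min_set:
  assumes x: "x \<in> E_sm" and y: "y \<in> E_sm"
  shows "(\<Union>x'\<in>sm_class x. \<Union>y'\<in>sm_class y. co_class (\<lambda>e. min (x' e) (y' e))) = co_class (\<lambda>e. min (x e) (y e))"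
proof (rule UN_const[OF _ sm_class_self[OF x]])
  fix x' assume x': "x' \<in> sm_class x"
  show "(\<Union>y'\<in>sm_class y. co_class (\<lambda>e. min (x' e) (y' e))) = co_class (\<lambda>e. min (x e) (y e))"
  proof (rule UN_const[OF _ sm_class_self[OF y]])
    fix y' assume y': "y' \<in> sm_class y"
    have E: "x' \<in> E_sm" "y' \<in> E_sm" and nx: "negligible (\<lambda>e. x e - x' e)" and ny: "negligible (\<lambda>e. y e - y' e)"
      using x' y' by (auto simp: sm_class_cls mem_cls)
    have "negligible (\<lambda>e. min (x' e) (y' e) - min (x e) (y e))"
    proof (rule negligible_abs_sum3[OF nx ny negligible_zero])
      show "\<forall>e\<in>netI. \<bar>min (x' e) (y' e) - min (x e) (y e)\<bar> \<le> \<bar>x e - x' e\<bar> + \<bar>y e - y' e\<bar> + \<bar>0\<bar>"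
        by (auto simp: min_def abs_if)
    qed
    then show "co_class (\<lambda>e. min (x' e) (y' e)) = co_class (\<lambda>e. min (x e) (y e))"
      unfolding co_class_cls using E x y by (intro cls_eqI E_co_min E_sm_co) auto
  qed
qed

lemma sm_max_eq:
  assumes x: "x \<in> E_sm" and y: "y \<in> E_sm"
  shows "sm_max (sm_class x) (sm_class y) = sm_class (smx x y)"
proof -
  have "negligible (\<lambda>e. smx x y e - max (x e) (y e))"
    by (rule negligible_le[OF negligible_ww])
       (use smx_ge[where x=x and y=y] smx_le[where x=x and y=y] ww_pos in \<open>smt (verit)\<close>)
  then have "co_class (smx x y) = co_class (\<lambda>e. max (x e) (y e))"
    unfolding co_class_cls using x y by (intro cls_eqI E_co_max E_sm_co) auto
  then have "tau_sm (sm_class (smx x y)) = co_class (\<lambda>e. max (x e) (y e))"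
    using x y by (simp add: tau_cls)
  then show ?thesis unfolding sm_max_def max_set[OF x y]
    by (rule the_inv_into_f_eq[OF inj_tau]) (use x y in simp)
qed

lemma sm_min_eq:
  assumes x: "x \<in> E_sm" and y: "y \<in> E_sm"
  shows "sm_min (sm_class x) (sm_class y) = sm_class (smn x y)"
proof -
  have "negligible (\<lambda>e. smn x y e - min (x e) (y e))"
    by (rule negligible_le[OF negligible_ww])
       (use smn_ge[where x=x and y=y] smn_le[where x=x and y=y] ww_pos in \<open>smt (verit)\<close>)
  then have "co_class (smn x y) = co_class (\<lambda>e. min (x e) (y e))"
    unfolding co_class_cls using x y by (intro cls_eqI E_co_min E_sm_co) auto
  then have "tau_sm (sm_class (smn x y)) = co_class (\<lambda>e. min (x e) (y e))"
    using x y by (simp add: tau_cls)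
  then show ?thesis unfolding sm_min_def min_set[OF x y]
    by (rule the_inv_into_f_eq[OF inj_tau]) (use x y in simp)
qed

lemma lattice_R_sm: "lattice R_sm_order"
proof -
  have po: "partial_order R_sm_order" by (rule po_R_sm)
  have sup: "\<exists>s. least R_sm_order s (Upper R_sm_order {X, Y})" if "X \<in> R_sm" "Y \<in> R_sm" for X Y
    using that by (auto elim!: R_sm_cases intro: lub_R_sm)
  have inf: "\<exists>s. greatest R_sm_order s (Lower R_sm_order {X, Y})" if "X \<in> R_sm" "Y \<in> R_sm" for X Y
    using that by (auto elim!: R_sm_cases intro: glb_R_sm)
  show ?thesis
    unfolding lattice_def upper_semilattice_def lower_semilattice_def
      upper_semilattice_axioms_def lower_semilattice_axioms_def
    using po sup inf by simp
qed

theorem proposition4p13: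
  shows "ring R_sm_ring
    \<and> partial_order R_sm_order
    \<and> (\<forall>a\<in>R_sm. \<forall>b\<in>R_sm. \<forall>c\<in>R_sm. sm_le a b \<longrightarrow> sm_le (sm_add a c) (sm_add b c))
    \<and> (\<forall>a\<in>R_sm. \<forall>b\<in>R_sm. sm_le (sm_class (\<lambda>_. 0)) a \<and> sm_le (sm_class (\<lambda>_. 0)) b
          \<longrightarrow> sm_le (sm_class (\<lambda>_. 0)) (sm_mult a b))
    \<and> lattice R_sm_order
    \<and> (\<forall>r\<in>R_sm. \<forall>s\<in>R_sm. join R_sm_order r s = sm_max r s \<and> meet R_sm_order r s = sm_min r s)"
proof (intro conjI ballI impI)
  show "ring R_sm_ring" by (rule ring_R_sm)
  show "partial_order R_sm_order" by (rule po_R_sm)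
  show "lattice R_sm_order" by (rule lattice_R_sm)
  show "\<And>a b c. a \<in> R_sm \<Longrightarrow> b \<in> R_sm \<Longrightarrow> c \<in> R_sm \<Longrightarrow> sm_le a b \<Longrightarrow> sm_le (sm_add a c) (sm_add b c)"
    by (rule add_mono_R_sm)
  show "\<And>a b. a \<in> R_sm \<Longrightarrow> b \<in> R_sm \<Longrightarrow> sm_le (sm_class (\<lambda>_. 0)) a \<and> sm_le (sm_class (\<lambda>_. 0)) b
          \<Longrightarrow> sm_le (sm_class (\<lambda>_. 0)) (sm_mult a b)"
    using mult_pos_R_sm by blast
  fix r s assume r: "r \<in> R_sm" and s: "s \<in> R_sm"
  obtain x where x: "x \<in> E_sm" "r = sm_class x" using r by (rule R_sm_cases)
  obtain y where y: "y \<in> E_sm" "s = sm_class y" using s by (rule R_sm_cases)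
  show "join R_sm_order r s = sm_max r s"
    unfolding x(2) y(2) sm_max_eq[OF x(1) y(1)]
    by (rule join_eq[OF po_R_sm lub_R_sm[OF x(1) y(1)]])
  show "meet R_sm_order r s = sm_min r s"
    unfolding x(2) y(2) sm_min_eq[OF x(1) y(1)]
    by (rule meet_eq[OF po_R_sm glb_R_sm[OF x(1) y(1)]])
qed

end
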